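(* Let $\mathcal{G}=\langle\mathcal{Q},\mathbf{f}\rangle$ be a monotone NEP satisfying Assumption 2 with nonempty solution set $\mathrm{SOL}(\mathcal{Q},\mathbf{f})$ (its set of Nash equilibria). Let $\phi:\mathbb{R}^n\to\mathbb{R}$ satisfy: (i) $\phi$ is continuously differentiable and convex on $\mathcal{Q}$; (ii) the level sets of $\phi$ on $\mathrm{SOL}(\mathcal{Q},\mathbf{f})$ are bounded; (iii) $\nabla\phi$ is Lipschitz continuous on $\mathcal{Q}$ with constant $L_\phi$. Let $\tau>0$ be large enough that every game $\mathcal{G}_{\tau,\varepsilon^{(n)},\mathbf{x}^{(n)}}$ below is a P$_{\boldsymbol\Upsilon}$ NEP, and let $\varepsilon^{(n)}>0$ with $\varepsilon^{(n)}\downarrow0$ and $\sum_{n=0}^\infty\varepsilon^{(n)}=\infty$. Define $\mathbf{x}^{(0)}\in\mathcal{Q}$ and, for $n\ge0$, $\mathbf{x}^{(n+1)}$ = the (unique) NE of $\mathcal{G}_{\tau,\varepsilon^{(n)},\mathbf{x}^{(n)}}$. Then the sequence $\{\mathbf{x}^{(n)}\}$ is well defined and bounded, and every limit point of it solves $\min\{\phi(\mathbf{x}):\mathbf{x}\in\mathrm{SOL}(\mathcal{Q},\mathbf{f})\}$.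
   Context: Real NEP: player $i$ chooses $\mathbf{x}_i\in\mathcal{Q}_i\subseteq\mathbb{R}^{n_i}$ minimizing $f_i(\mathbf{x}_i,\mathbf{x}_{-i})$; $\mathcal{Q}=\prod_i\mathcal{Q}_i$. NE: $\mathbf{x}^\star\in\mathcal{Q}$ with $f_i(\mathbf{x}^\star_i,\mathbf{x}^\star_{-i})\le f_i(\mathbf{x}_i,\mathbf{x}^\star_{-i})$ for all $\mathbf{x}_i\in\mathcal{Q}_i$, all $i$. Assumption 1: $\mathcal{Q}_i$ nonempty closed convex, $f_i$ continuously differentiable on $\mathcal{Q}$, convex in $\mathbf{x}_i$. Assumption 2: $f_i$ twice continuously differentiable with bounded derivatives on $\mathcal{Q}$. Monotone NEP: Assumption 1 and $\mathbf{F}=(\nabla_{\mathbf{x}_i}f_i)_i$ monotone on $\mathcal{Q}$. $\mathcal{G}_{\tau,\varepsilon,\mathbf{y}}$: the game in which player $i$ minimizes $f_i(\mathbf{x}_i,\mathbf{x}_{-i})+\varepsilon\phi(\mathbf{x}_i,\mathbf{x}_{-i})+\frac\tau2\|\mathbf{x}_i-\mathbf{y}_i\|^2$ over $\mathcal{Q}_i$. P$_{\boldsymbol\Upsilon}$ NEP: Assumptions 1–2 hold and the $I\times I$ matrix with diagonal $\inf_{\mathcal{Q}}\lambda_{\rm least}(\mathbf{J}_i\mathbf{G}_i)$ and off-diagonal $-\sup_{\mathcal{Q}}\|\mathbf{J}_j\mathbf{G}_i\|_2$ (where $\mathbf{G}_i$ is the gradient of player $i$'s cost w.r.t. $\mathbf{x}_i$,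 $\lambda_{\rm least}(\mathbf{A})$ the smallest eigenvalue of $(\mathbf{A}+\mathbf{A}^T)/2$) is a P-matrix. *)

theory Defs
  imports "HOL-Analysis.Analysis"
begin

text \<open>Players are the elements of a finite type 'p; the joint strategy space is
  real^'n; the map blk assigns to each coordinate the player owning it, so the
  block of player i is the copy of R^(n_i) consisting of the coordinates k with
  blk k = i.  Player strategy sets Q_i are subsets of that block subspace.\<close>

definition block_set :: "('n::finite \<Rightarrow> 'p) \<Rightarrow> 'p \<Rightarrow> (real^'n) set" where
  "block_set blk i = {y. \<forall>k. blk k \<noteq> i \<longrightarrow> y $ k = 0}"

definition proj :: "('n::finite \<Rightarrow> 'p) \<Rightarrow> 'p \<Rightarrow> real^'n \<Rightarrow> real^'n" where
  "proj blk i x = (\<chi> k. if blk k = i then x $ k else 0)"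

definition upd :: "('n::finite \<Rightarrow> 'p) \<Rightarrow> real^'n \<Rightarrow> 'p \<Rightarrow> real^'n \<Rightarrow> real^'n" where
  "upd blk x i y = (\<chi> k. if blk k = i then y $ k else x $ k)"

definition prodQ :: "('n::finite \<Rightarrow> 'p) \<Rightarrow> ('p \<Rightarrow> (real^'n) set) \<Rightarrow> (real^'n) set" where
  "prodQ blk Qi = {x. \<forall>i. proj blk i x \<in> Qi i}"

definition is_NE :: "('n::finite \<Rightarrow> 'p) \<Rightarrow> ('p \<Rightarrow> (real^'n) set) \<Rightarrow> ('p \<Rightarrow> real^'n \<Rightarrow> real)
    \<Rightarrow> real^'n \<Rightarrow> bool" where
  "is_NE blk Qi f x \<longleftrightarrow> x \<in> prodQ blk Qi \<and>
     (\<forall>i. \<forall>y \<in> Qi i. f i x \<le> f i (upd blk x i y))"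

definition SOL :: "('n::finite \<Rightarrow> 'p) \<Rightarrow> ('p \<Rightarrow> (real^'n) set) \<Rightarrow> ('p \<Rightarrow> real^'n \<Rightarrow> real)
    \<Rightarrow> (real^'n) set" where
  "SOL blk Qi f = {x. is_NE blk Qi f x}"

definition has_grads :: "(real^'n::finite) set \<Rightarrow> ('p \<Rightarrow> real^'n \<Rightarrow> real)
    \<Rightarrow> ('p \<Rightarrow> real^'n \<Rightarrow> real^'n) \<Rightarrow> bool" where
  "has_grads U f gg \<longleftrightarrow>
     (\<forall>i. \<forall>x\<in>U. (f i has_derivative (\<lambda>h. gg i x \<bullet> h)) (at x)) \<and>
     (\<forall>i. continuous_on U (gg i))"

text \<open>F(x) = (grad_{x_i} f_i(x))_i, assembled from full gradients\<close>
definition pseudo_grad :: "('n::finite \<Rightarrow> 'p) \<Rightarrow> ('p \<Rightarrow> real^'n \<Rightarrow> real^'n) \<Rightarrow> real^'n \<Rightarrow> real^'n" where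
  "pseudo_grad blk gg x = (\<chi> k. gg (blk k) x $ k)"

definition Assumption1 :: "('n::finite \<Rightarrow> 'p) \<Rightarrow> ('p \<Rightarrow> (real^'n) set) \<Rightarrow> ('p \<Rightarrow> real^'n \<Rightarrow> real) \<Rightarrow> bool" where
  "Assumption1 blk Qi f \<longleftrightarrow>
     (\<forall>i. Qi i \<noteq> {} \<and> closed (Qi i) \<and> convex (Qi i) \<and> Qi i \<subseteq> block_set blk i) \<and>
     (\<exists>U gg. open U \<and> prodQ blk Qi \<subseteq> U \<and> has_grads U f gg) \<and>
     (\<forall>i. \<forall>x \<in> prodQ blk Qi. convex_on (Qi i) (\<lambda>y. f i (upd blk x i y)))"

definition has_grads_hess :: "(real^'n::finite) set \<Rightarrow> ('p \<Rightarrow> real^'n \<Rightarrow> real)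
    \<Rightarrow> ('p \<Rightarrow> real^'n \<Rightarrow> real^'n) \<Rightarrow> ('p \<Rightarrow> real^'n \<Rightarrow> real^'n^'n) \<Rightarrow> bool" where
  "has_grads_hess U f gg Hf \<longleftrightarrow> has_grads U f gg \<and>
     (\<forall>i. \<forall>x\<in>U. (gg i has_derivative (\<lambda>h. Hf i x *v h)) (at x)) \<and>
     (\<forall>i. continuous_on U (Hf i))"

definition Assumption2 :: "('n::finite \<Rightarrow> 'p) \<Rightarrow> ('p \<Rightarrow> (real^'n) set) \<Rightarrow> ('p \<Rightarrow> real^'n \<Rightarrow> real) \<Rightarrow> bool" where
  "Assumption2 blk Qi f \<longleftrightarrow>
     (\<exists>U gg Hf. open U \<and> prodQ blk Qi \<subseteq> U \<and> has_grads_hess U f gg Hf \<and>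
        (\<forall>i. bounded (gg i ` prodQ blk Qi) \<and> bounded (Hf i ` prodQ blk Qi)))"

definition monotone_NEP :: "('n::finite \<Rightarrow> 'p) \<Rightarrow> ('p \<Rightarrow> (real^'n) set) \<Rightarrow> ('p \<Rightarrow> real^'n \<Rightarrow> real) \<Rightarrow> bool" where
  "monotone_NEP blk Qi f \<longleftrightarrow> Assumption1 blk Qi f \<and>
     (\<exists>U gg. open U \<and> prodQ blk Qi \<subseteq> U \<and> has_grads U f gg \<and>
        (\<forall>x \<in> prodQ blk Qi. \<forall>y \<in> prodQ blk Qi.
            0 \<le> (pseudo_grad blk gg x - pseudo_grad blk gg y) \<bullet> (x - y)))"

text \<open>lambda_least of the diagonal block (i,i) of a matrix A: the smallest eigenvalue of
  the symmetric part of the n_i x n_i submatrix (rows and columns in block i).\<close>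
definition lambda_least_block :: "('n::finite \<Rightarrow> 'p) \<Rightarrow> 'p \<Rightarrow> real^'n^'n \<Rightarrow> real" where
  "lambda_least_block blk i A =
     Inf {lam. \<exists>v. v \<in> block_set blk i \<and> v \<noteq> 0 \<and>
          proj blk i (((1/2) *\<^sub>R (A + transpose A)) *v v) = lam *\<^sub>R v}"

definition block_norm :: "('n::finite \<Rightarrow> 'p) \<Rightarrow> 'p \<Rightarrow> 'p \<Rightarrow> real^'n^'n \<Rightarrow> real" where
  "block_norm blk i j A = onorm (\<lambda>v. proj blk i (A *v proj blk j v))"

definition principal_minor :: "real^'p^'p \<Rightarrow> 'p set \<Rightarrow> real" where
  "principal_minor M S =
     (\<Sum>p \<in> {p. p permutes S}. of_int (sign p) * (\<Prod>i\<in>S. M $ i $ p i))"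

definition P_matrix :: "real^'p::finite^'p \<Rightarrow> bool" where
  "P_matrix M \<longleftrightarrow> (\<forall>S. S \<noteq> {} \<longrightarrow> principal_minor M S > 0)"

text \<open>The Upsilon matrix built from the Hessians Hf i of the costs
  (J_j G_i is the (i,j) block of the Hessian of f_i)\<close>
definition Upsilon :: "('n::finite \<Rightarrow> 'p::finite) \<Rightarrow> ('p \<Rightarrow> (real^'n) set)
    \<Rightarrow> ('p \<Rightarrow> real^'n \<Rightarrow> real^'n^'n) \<Rightarrow> real^'p^'p" where
  "Upsilon blk Qi Hf = (\<chi> i j. if i = j
       then (INF x \<in> prodQ blk Qi. lambda_least_block blk i (Hf i x))
       else - (SUP x \<in> prodQ blk Qi. block_norm blk i j (Hf i x)))"

definition PUps_NEP :: "('n::finite \<Rightarrow> 'p::finite) \<Rightarrow> ('p \<Rightarrow> (real^'n) set) \<Rightarrow> ('p \<Rightarrow> real^'n \<Rightarrow> real) \<Rightarrow> bool" where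
  "PUps_NEP blk Qi f \<longleftrightarrow> Assumption1 blk Qi f \<and> Assumption2 blk Qi f \<and>
     (\<exists>U gg Hf. open U \<and> prodQ blk Qi \<subseteq> U \<and> has_grads_hess U f gg Hf \<and>
        P_matrix (Upsilon blk Qi Hf))"

definition pert_game :: "('n::finite \<Rightarrow> 'p) \<Rightarrow> ('p \<Rightarrow> real^'n \<Rightarrow> real) \<Rightarrow> (real^'n \<Rightarrow> real)
    \<Rightarrow> real \<Rightarrow> real \<Rightarrow> real^'n \<Rightarrow> 'p \<Rightarrow> real^'n \<Rightarrow> real" where
  "pert_game blk f phi tau eps y = (\<lambda>i x. f i x + eps * phi x
       + tau / 2 * (norm (proj blk i x - proj blk i y))^2)"

end

theory Submission
  imports Defs
begin



lemma quot_lim: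
  fixes c :: "'a::real_normed_vector \<Rightarrow> real"
  assumes "(c has_derivative D) (at a)"
  shows "((\<lambda>t. (c (a + t *\<^sub>R d) - c a) / t) \<longlongrightarrow> D d) (at_right 0)"
proof -
  have lin: "linear D" using assms has_derivative_linear by blast
  have "((\<lambda>t. a + t *\<^sub>R d) has_derivative (\<lambda>t. t *\<^sub>R d)) (at 0)"
    by (auto intro!: derivative_eq_intros)
  then have "((\<lambda>t. c (a + t *\<^sub>R d)) has_derivative (\<lambda>t. D (t *\<^sub>R d))) (at 0)"
    using has_derivative_compose[of "\<lambda>t. a + t *\<^sub>R d" _ 0 UNIV c D] assms by simp
  moreover have "(\<lambda>t. D (t *\<^sub>R d)) = (\<lambda>t. t * D d)"
    using lin by (simp add: linear_scale)
  moreover have "(\<lambda>t. t * D d) = (*) (D d)" by (auto simp: mult.commute)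
  ultimately have "((\<lambda>t. c (a + t *\<^sub>R d)) has_field_derivative D d) (at 0)"
    by (simp add: has_field_derivative_def)
  then have "((\<lambda>t. (c (a + t *\<^sub>R d) - c a) / (t - 0)) \<longlongrightarrow> D d) (at 0)"
    using has_field_derivative_iff[THEN iffD1] by fastforce
  then show ?thesis
    by (simp add: filterlim_at_split)
qed

lemma conv_grad_ineq:
  fixes c :: "'a::real_normed_vector \<Rightarrow> real"
  assumes cv: "convex_on C c" and a: "a \<in> C" and b: "b \<in> C"
    and d: "(c has_derivative D) (at a)"
  shows "D (b - a) \<le> c b - c a"
proof -
  have lim: "((\<lambda>t. (c (a + t *\<^sub>R (b - a)) - c a) / t) \<longlongrightarrow> D (b - a)) (at_right 0)"
    by (rule quot_lim[OF d])
  have "\<forall>\<^sub>F t in at_right 0. (c (a + t *\<^sub>R (b - a)) - c a) / t \<le> c b - c a"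
  proof -
    have "\<forall>\<^sub>F t in at_right (0::real). 0 < t \<and> t < 1"
      by (simp add: eventually_at_right_less eventually_conj eventually_at_right_field exI[of _ 1])
    then show ?thesis
    proof (rule eventually_mono)
      fix t :: real assume t: "0 < t \<and> t < 1"
      have eq: "a + t *\<^sub>R (b - a) = (1 - t) *\<^sub>R a + t *\<^sub>R b" by (simp add: algebra_simps)
      have "c ((1 - t) *\<^sub>R a + t *\<^sub>R b) \<le> (1 - t) * c a + t * c b"
        using cv a b t by (intro convex_onD) auto
      then have "c (a + t *\<^sub>R (b - a)) - c a \<le> t * (c b - c a)"
        by (simp add: eq algebra_simps)
      then show "(c (a + t *\<^sub>R (b - a)) - c a) / t \<le> c b - c a"
        using t by (simp add: divide_le_eq mult.commute)
    qed
  qed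
  then show ?thesis using tendsto_upperbound[OF lim] by simp
qed

lemma min_grad:
  fixes c :: "'a::real_normed_vector \<Rightarrow> real"
  assumes C: "convex C" and a: "a \<in> C" and b: "b \<in> C" and m: "\<forall>y\<in>C. c a \<le> c y"
    and d: "(c has_derivative D) (at a)"
  shows "0 \<le> D (b - a)"
proof -
  have lim: "((\<lambda>t. (c (a + t *\<^sub>R (b - a)) - c a) / t) \<longlongrightarrow> D (b - a)) (at_right 0)"
    by (rule quot_lim[OF d])
  have "\<forall>\<^sub>F t in at_right 0. 0 \<le> (c (a + t *\<^sub>R (b - a)) - c a) / t"
  proof -
    have "\<forall>\<^sub>F t in at_right (0::real). 0 < t \<and> t < 1"
      by (simp add: eventually_at_right_less eventually_conj eventually_at_right_field exI[of _ 1])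
    then show ?thesis
    proof (rule eventually_mono)
      fix t :: real assume t: "0 < t \<and> t < 1"
      have eq: "a + t *\<^sub>R (b - a) = (1 - t) *\<^sub>R a + t *\<^sub>R b" by (simp add: algebra_simps)
      have "(1 - t) *\<^sub>R a + t *\<^sub>R b \<in> C" using C a b t by (intro convexD) auto
      then show "0 \<le> (c (a + t *\<^sub>R (b - a)) - c a) / t" using m t eq by auto
    qed
  qed
  then show ?thesis using tendsto_lowerbound[OF lim] by simp
qed




lemma seq_lemma:
  fixes a e :: "nat \<Rightarrow> real"
  assumes a0: "\<forall>n. 0 \<le> a n" and c: "c > 0" and e0: "\<forall>n. 0 \<le> e n"
    and st: "\<forall>n\<ge>N. a (Suc n) < d \<or> a (Suc n) \<le> a n - c * e n"
    and div: "filterlim (\<lambda>M. \<Sum>n<M. e n) at_top sequentially"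
  shows "\<exists>M. \<forall>n\<ge>M. a n < d"
proof (cases "\<exists>m\<ge>N. a m < d")
  case True
  then obtain m where m: "m \<ge> N" "a m < d" by blast
  have "\<forall>n\<ge>m. a n < d"
  proof (intro allI impI)
    fix n assume "n \<ge> m"
    then show "a n < d"
    proof (induction n rule: dec_induct)
      case base then show ?case using m by simp
    next
      case (step k)
      have "a (Suc k) < d \<or> a (Suc k) \<le> a k - c * e k" using st step m by auto
      moreover have "c * e k \<ge> 0" using c e0 by simp
      ultimately show ?case using step by linarith
    qed
  qed
  then show ?thesis by blast
next
  case False
  then have dec: "\<forall>n\<ge>N. a (Suc n) \<le> a n - c * e n" using st by (meson le_SucI not_less)
  have tel: "\<forall>M\<ge>N. a M \<le> a N - c * (\<Sum>n\<in>{N..<M}. e n)"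
  proof (intro allI impI)
    fix M assume "M \<ge> N"
    then show "a M \<le> a N - c * (\<Sum>n\<in>{N..<M}. e n)"
    proof (induction M rule: dec_induct)
      case base then show ?case by simp
    next
      case (step k)
      have "a (Suc k) \<le> a k - c * e k" using dec step by auto
      moreover have "(\<Sum>n\<in>{N..<Suc k}. e n) = (\<Sum>n\<in>{N..<k}. e n) + e k"
        using step by simp
      ultimately show ?case using step by (simp add: algebra_simps)
    qed
  qed
  have "\<forall>\<^sub>F M in sequentially. (\<Sum>n<M. e n) > a N / c + (\<Sum>n<N. e n)"
    using div by (simp add: filterlim_at_top_dense)
  then obtain M0 where M0: "\<forall>M\<ge>M0. (\<Sum>n<M. e n) > a N / c + (\<Sum>n<N. e n)"
    by (auto simp: eventually_sequentially)
  define M where "M = max M0 N"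
  have "(\<Sum>n<M. e n) > a N / c + (\<Sum>n<N. e n)" using M0 M_def by simp
  moreover have "(\<Sum>n<M. e n) = (\<Sum>n<N. e n) + (\<Sum>n\<in>{N..<M}. e n)"
    using M_def by (metis lessThan_atLeast0 max.cobounded2 sum.atLeastLessThan_concat zero_le)
  ultimately have "(\<Sum>n\<in>{N..<M}. e n) > a N / c" by simp
  then have "c * (\<Sum>n\<in>{N..<M}. e n) > a N" using c by (simp add: field_simps)
  moreover have "a M \<le> a N - c * (\<Sum>n\<in>{N..<M}. e n)" using tel M_def by simp
  ultimately have "a M < 0" by linarith
  then show ?thesis using a0 by (meson not_le)
qed




lemma key_ineq:
  fixes F P :: "'a::real_inner \<Rightarrow> 'a"
  assumes tau: "tau > 0" and e: "e \<ge> 0"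
    and stepz: "0 \<le> (F y + e *\<^sub>R P y + tau *\<^sub>R (y - x)) \<bullet> (w - y)"
    and mon: "0 \<le> (F y - F w) \<bullet> (y - w)"
    and wsv: "0 \<le> F w \<bullet> (y - w)"
    and gr: "P y \<bullet> (w - y) \<le> phi w - phi y"
  shows "norm (y - w)^2 \<le> norm (x - w)^2 - norm (y - x)^2 - 2 * e / tau * (phi y - phi w)"
proof -
  have h2: "F y \<bullet> (w - y) \<le> 0"
    using mon wsv by (simp add: inner_diff_left inner_diff_right inner_commute)
  have h3: "e * (P y \<bullet> (w - y)) \<le> e * (phi w - phi y)" using e gr mult_left_mono by blast
  have h1: "0 \<le> F y \<bullet> (w - y) + e * (P y \<bullet> (w - y)) + tau * ((y - x) \<bullet> (w - y))"
    using stepz by (simp add: inner_add_left)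
  have h4: "tau * ((y - x) \<bullet> (w - y)) \<ge> e * (phi y - phi w)"
    using h1 h2 h3 by (simp add: algebra_simps)
  have idt: "norm (x - w)^2 = norm (y - x)^2 + norm (y - w)^2 + 2 * ((y - x) \<bullet> (w - y))"
  proof -
    have sq: "\<And>a b::'a. norm (a + b)^2 = norm a^2 + norm b^2 + 2 * (a \<bullet> b)"
      by (simp add: power2_norm_eq_inner inner_add_left inner_add_right inner_commute)
    have "norm (x - w)^2 = norm (x - y)^2 + norm (y - w)^2 + 2 * ((x - y) \<bullet> (y - w))"
      using sq[of "x - y" "y - w"] by simp
    also have "(x - y) \<bullet> (y - w) = (y - x) \<bullet> (w - y)"
      by (simp add: inner_diff_left inner_diff_right inner_commute)
    also have "norm (x - y) = norm (y - x)" by (simp add: norm_minus_commute)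
    finally show ?thesis .
  qed
  have "2 * e / tau * (phi y - phi w) \<le> 2 * ((y - x) \<bullet> (w - y))"
    using h4 tau by (simp add: field_simps)
  then show ?thesis using idt by linarith
qed




lemma hier:
  fixes F P :: "'a::euclidean_space \<Rightarrow> 'a" and phi :: "'a \<Rightarrow> real"
    and x :: "nat \<Rightarrow> 'a" and e :: "nat \<Rightarrow> real"
  assumes Q: "compact Q"
    and Fc: "continuous_on Q F" and Fm: "\<forall>a\<in>Q. \<forall>b\<in>Q. 0 \<le> (F a - F b) \<bullet> (a - b)"
    and phic: "continuous_on Q phi" and Pc: "continuous_on Q P"
    and grad: "\<forall>a\<in>Q. \<forall>b\<in>Q. P a \<bullet> (b - a) \<le> phi b - phi a"
    and SVne: "{w\<in>Q. \<forall>z\<in>Q. 0 \<le> F w \<bullet> (z - w)} \<noteq> {}"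
    and tau: "tau > 0" and epos: "\<forall>n. e n > 0" and elim: "e \<longlonglongrightarrow> 0"
    and div: "filterlim (\<lambda>M. \<Sum>n<M. e n) at_top sequentially"
    and xQ: "\<forall>n. x n \<in> Q"
    and step: "\<forall>n. \<forall>z\<in>Q. 0 \<le> (F (x (Suc n)) + e n *\<^sub>R P (x (Suc n)) + tau *\<^sub>R (x (Suc n) - x n)) \<bullet> (z - x (Suc n))"
    and lp: "strict_mono r" "(x \<circ> r) \<longlonglongrightarrow> z"
  shows "z \<in> {w\<in>Q. \<forall>z\<in>Q. 0 \<le> F w \<bullet> (z - w)} \<and> (\<forall>w\<in>{w\<in>Q. \<forall>z\<in>Q. 0 \<le> F w \<bullet> (z - w)}. phi z \<le> phi w)"
proof -
  define SV where "SV = {w\<in>Q. \<forall>z\<in>Q. 0 \<le> F w \<bullet> (z - w)}"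
  have Qcl: "closed Q" using Q compact_imp_closed by blast
  have SVeq: "SV = Q \<inter> (\<Inter>z\<in>Q. Q \<inter> (\<lambda>w. F w \<bullet> (z - w)) -` {0..})"
    unfolding SV_def by auto
  have "closed SV"
    unfolding SVeq
  proof (rule closed_Int[OF Qcl], rule closed_INT, rule ballI)
    fix z assume "z \<in> Q"
    have "continuous_on Q (\<lambda>w. F w \<bullet> (z - w))" by (intro continuous_intros Fc)
    then show "closed (Q \<inter> (\<lambda>w. F w \<bullet> (z - w)) -` {0..})"
      using continuous_closed_preimage Qcl closed_atLeast by blast
  qed
  have SVQ: "SV \<subseteq> Q" unfolding SV_def by auto
  have SVc: "compact SV" using compact_Int_closed[OF Q \<open>closed SV\<close>] SVQ
    by (simp add: Int_absorb1)
  have SVne': "SV \<noteq> {}" using SVne SV_def by simp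
  obtain s where s: "s \<in> SV" "\<forall>v\<in>SV. phi s \<le> phi v"
    using continuous_attains_inf[OF SVc SVne' continuous_on_subset[OF phic SVQ]] by blast
  define ps where "ps = phi s"
  define S where "S = {w\<in>SV. phi w \<le> ps}"
  have Seq: "S = SV \<inter> (Q \<inter> phi -` {..ps})" unfolding S_def using SVQ by auto
  have Scl: "closed S" unfolding Seq
    using continuous_closed_preimage[OF phic Qcl closed_atMost] \<open>closed SV\<close> by blast
  have Sne: "S \<noteq> {}" using s S_def ps_def by auto
  have Sprop: "\<And>w. w \<in> S \<Longrightarrow> w \<in> SV \<and> w \<in> Q \<and> phi w = ps"
    using S_def s ps_def SVQ by force
  obtain R where R: "R > 0" "\<forall>y\<in>Q. norm y \<le> R"
    using compact_imp_bounded[OF Q] bounded_pos by blast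
  have "bounded (P ` Q)" using compact_imp_bounded[OF compact_continuous_image[OF Pc Q]] .
  then obtain BP where BP: "BP > 0" "\<forall>y\<in>Q. norm (P y) \<le> BP" unfolding bounded_pos by auto
  have "bounded (phi ` Q)" using compact_imp_bounded[OF compact_continuous_image[OF phic Q]] .
  then obtain Bphi where Bphi: "Bphi > 0" "\<forall>y\<in>Q. norm (phi y) \<le> Bphi" unfolding bounded_pos by auto
  have dQ: "\<And>u v. u \<in> Q \<Longrightarrow> v \<in> Q \<Longrightarrow> norm (u - v) \<le> 2 * R"
    using R by (smt (verit) norm_triangle_ineq4)
  have approx: "\<exists>\<eta>>0. \<forall>y\<in>Q. phi y \<le> ps + \<eta> \<and> (\<forall>z\<in>Q. - \<eta> \<le> F y \<bullet> (z - y)) \<longrightarrow> infdist y S < \<delta>"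
    if dpos: "\<delta> > 0" for \<delta>
  proof (rule ccontr)
    assume "\<not> ?thesis"
    then have "\<forall>k::nat. \<exists>y. y \<in> Q \<and> phi y \<le> ps + inverse (real (Suc k)) \<and>
        (\<forall>z\<in>Q. - inverse (real (Suc k)) \<le> F y \<bullet> (z - y)) \<and> \<delta> \<le> infdist y S"
      by (metis inverse_positive_iff_positive not_less of_nat_0_less_iff zero_less_Suc)
    then obtain yk where yk: "\<And>k. yk k \<in> Q" "\<And>k. phi (yk k) \<le> ps + inverse (real (Suc k))"
      "\<And>k. \<forall>z\<in>Q. - inverse (real (Suc k)) \<le> F (yk k) \<bullet> (z - yk k)" "\<And>k. \<delta> \<le> infdist (yk k) S"
      by metis
    obtain y r where yr: "y \<in> Q" "strict_mono r" "(yk \<circ> r) \<longlonglongrightarrow> y"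
      using seq_compactE[OF compact_imp_seq_compact[OF Q], of yk] yk(1) by blast
    have lim0: "(\<lambda>k. inverse (real (Suc (r k)))) \<longlonglongrightarrow> 0"
      using LIMSEQ_subseq_LIMSEQ[OF LIMSEQ_inverse_real_of_nat yr(2)] by (simp add: o_def)
    have ylim: "(\<lambda>k. yk (r k)) \<longlonglongrightarrow> y" using yr(3) by (simp add: o_def)
    have evQ: "\<forall>\<^sub>F k in sequentially. yk (r k) \<in> Q" using yk(1) by simp
    have "(\<lambda>k. phi (yk (r k))) \<longlonglongrightarrow> phi y"
      using continuous_on_tendsto_compose[OF phic ylim yr(1) evQ] .
    moreover have "(\<lambda>k. ps + inverse (real (Suc (r k)))) \<longlonglongrightarrow> ps + 0"
      by (intro tendsto_intros lim0)
    ultimately have py: "phi y \<le> ps"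
      using yk(2) by (intro LIMSEQ_le[of "\<lambda>k. phi (yk (r k))" _ "\<lambda>k. ps + inverse (real (Suc (r k)))"]) auto
    have "y \<in> SV"
      unfolding SV_def
    proof (intro CollectI conjI ballI yr(1))
      fix z assume z: "z \<in> Q"
      have Fl: "(\<lambda>k. F (yk (r k))) \<longlonglongrightarrow> F y"
        using continuous_on_tendsto_compose[OF Fc ylim yr(1) evQ] .
      have "(\<lambda>k. F (yk (r k)) \<bullet> (z - yk (r k))) \<longlonglongrightarrow> F y \<bullet> (z - y)"
        by (intro tendsto_intros Fl ylim)
      moreover have "(\<lambda>k. - inverse (real (Suc (r k)))) \<longlonglongrightarrow> - 0"
        by (intro tendsto_intros lim0)
      ultimately show "0 \<le> F y \<bullet> (z - y)"
        using yk(3) z by (intro LIMSEQ_le[of "\<lambda>k. - inverse (real (Suc (r k)))" _ "\<lambda>k. F (yk (r k)) \<bullet> (z - yk (r k))"]) auto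
    qed
    then have "y \<in> S" using py S_def by auto
    then have "infdist y S = 0" by simp
    moreover have "(\<lambda>k. infdist (yk (r k)) S) \<longlonglongrightarrow> infdist y S"
      by (intro tendsto_intros ylim)
    ultimately have "\<delta> \<le> 0"
      using yk(4) by (intro LIMSEQ_le[of "\<lambda>k. \<delta>" _ "\<lambda>k. infdist (yk (r k)) S"]) auto
    then show False using dpos by simp
  qed
  define a where "a n = (infdist (x n) S)^2" for n
  have arec: "a (Suc n) \<le> a n - norm (x (Suc n) - x n)^2 - 2 * e n / tau * (phi (x (Suc n)) - ps)" for n
  proof -
    obtain w where w: "w \<in> S" "\<And>v. v \<in> S \<Longrightarrow> dist (x n) w \<le> dist (x n) v"
      using distance_attains_inf[OF Scl Sne] by blast
    have idw: "infdist (x n) S = dist (x n) w"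
    proof (rule antisym)
      show "infdist (x n) S \<le> dist (x n) w" using infdist_le w(1) .
      show "dist (x n) w \<le> infdist (x n) S"
        unfolding infdist_notempty[OF Sne] by (rule cINF_greatest[OF Sne w(2)])
    qed
    have wp: "w \<in> SV" "w \<in> Q" "phi w = ps" using Sprop[OF w(1)] by auto
    let ?y = "x (Suc n)"
    have K: "norm (?y - w)^2 \<le> norm (x n - w)^2 - norm (?y - x n)^2 - 2 * e n / tau * (phi ?y - phi w)"
    proof (rule key_ineq[OF tau])
      show "0 \<le> e n" using epos less_imp_le by blast
      show "0 \<le> (F ?y + e n *\<^sub>R P ?y + tau *\<^sub>R (?y - x n)) \<bullet> (w - ?y)" using step wp by blast
      show "0 \<le> (F ?y - F w) \<bullet> (?y - w)" using Fm xQ wp by blast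
      show "0 \<le> F w \<bullet> (?y - w)" using wp xQ SV_def by blast
      show "P ?y \<bullet> (w - ?y) \<le> phi w - phi ?y" using grad xQ wp by blast
    qed
    have "infdist ?y S \<le> dist ?y w" using infdist_le w by blast
    then have "(infdist ?y S)^2 \<le> (dist ?y w)^2" using power_mono[OF _ infdist_nonneg] by blast
    then show ?thesis using K unfolding a_def idw wp(3) by (simp add: dist_norm)
  qed
  have a0: "\<forall>n. 0 \<le> a n" unfolding a_def by simp
  have evsmall: "\<exists>M. \<forall>n\<ge>M. infdist (x n) S < \<delta>" if dpos: "\<delta> > 0" for \<delta>
  proof -
    obtain \<eta> where eta: "\<eta> > 0" "\<forall>y\<in>Q. phi y \<le> ps + \<eta> \<and> (\<forall>z\<in>Q. - \<eta> \<le> F y \<bullet> (z - y)) \<longrightarrow> infdist y S < \<delta>"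
      using approx[OF dpos] by blast
    define \<rho> where "\<rho> = \<eta> / (4 * tau * R)"
    have rho: "\<rho> > 0" using eta tau R by (simp add: \<rho>_def)
    have trho: "tau * \<rho> * (2 * R) = \<eta> / 2" using tau R by (simp add: \<rho>_def field_simps)
    define \<epsilon> where "\<epsilon> = min (\<eta> / (2 * BP * (2 * R))) (min (\<rho>^2 * tau / (8 * Bphi)) (\<rho>^2 * tau / (4 * \<eta>)))"
    have epsp: "\<epsilon> > 0" using eta BP R rho tau Bphi by (simp add: \<epsilon>_def)
    obtain N where N: "\<forall>n\<ge>N. e n < \<epsilon>"
      using elim epsp epos unfolding LIMSEQ_def dist_real_def
      by (metis abs_of_pos diff_zero)
    define c where "c = 2 * \<eta> / tau"
    have cp: "c > 0" using eta tau by (simp add: c_def)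
    have st: "\<forall>n\<ge>N. a (Suc n) < \<delta>^2 \<or> a (Suc n) \<le> a n - c * e n"
    proof (intro allI impI)
      fix n assume nN: "n \<ge> N"
      let ?y = "x (Suc n)"
      have en: "e n < \<epsilon>" "e n > 0" using N nN epos by auto
      have e1: "e n * (BP * (2 * R)) \<le> \<eta> / 2"
      proof -
        have "e n \<le> \<eta> / (2 * BP * (2 * R))" using en \<epsilon>_def by linarith
        then show ?thesis using BP R by (simp add: field_simps)
      qed
      have e2: "2 * e n / tau * (2 * Bphi) \<le> \<rho>^2 / 2"
      proof -
        have "e n \<le> \<rho>^2 * tau / (8 * Bphi)" using en \<epsilon>_def by linarith
        then show ?thesis using Bphi tau by (simp add: field_simps)
      qed
      have e3: "c * e n \<le> \<rho>^2 / 2"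
      proof -
        have "e n \<le> \<rho>^2 * tau / (4 * \<eta>)" using en \<epsilon>_def by linarith
        then show ?thesis using eta tau by (simp add: c_def field_simps)
      qed
      have yQ: "?y \<in> Q" using xQ by blast
      have phib: "phi ?y - ps \<ge> - (2 * Bphi)"
      proof -
        have sQ: "s \<in> Q" using s SVQ by blast
        have "\<bar>phi ?y\<bar> \<le> Bphi" "\<bar>phi s\<bar> \<le> Bphi" using Bphi yQ sQ by auto
        then show ?thesis unfolding ps_def by linarith
      qed
      show "a (Suc n) < \<delta>^2 \<or> a (Suc n) \<le> a n - c * e n"
      proof (cases "norm (?y - x n) > \<rho>")
        case True
        have "\<rho>^2 \<le> norm (?y - x n)^2" using True rho by (simp add: power_mono)
        moreover have "- (2 * e n / tau * (phi ?y - ps)) \<le> 2 * e n / tau * (2 * Bphi)"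
        proof -
          have "2 * e n / tau \<ge> 0" using en tau by simp
          then have "2 * e n / tau * (ps - phi ?y) \<le> 2 * e n / tau * (2 * Bphi)"
            using phib by (intro mult_left_mono) auto
          then show ?thesis by (metis minus_diff_eq mult_minus_right)
        qed
        ultimately have "a (Suc n) \<le> a n - \<rho>^2 / 2" using arec[of n] e2 by linarith
        then show ?thesis using e3 by linarith
      next
        case False
        show ?thesis
        proof (cases "phi ?y \<le> ps + \<eta>")
          case True
          have "\<forall>z\<in>Q. - \<eta> \<le> F ?y \<bullet> (z - ?y)"
          proof
            fix z assume zQ: "z \<in> Q"
            have s0: "0 \<le> F ?y \<bullet> (z - ?y) + e n * (P ?y \<bullet> (z - ?y)) + tau * ((?y - x n) \<bullet> (z - ?y))"
              using step zQ by (simp add: inner_add_left)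
            have "\<bar>P ?y \<bullet> (z - ?y)\<bar> \<le> BP * (2 * R)"
              using Cauchy_Schwarz_ineq2[of "P ?y" "z - ?y"] BP dQ[OF zQ yQ] yQ
              by (smt (verit, best) mult_mono norm_ge_zero)
            then have t1: "e n * (P ?y \<bullet> (z - ?y)) \<le> \<eta> / 2"
              using e1 en by (smt (verit, best) abs_le_D1 mult_left_mono)
            have "\<bar>(?y - x n) \<bullet> (z - ?y)\<bar> \<le> \<rho> * (2 * R)"
              using Cauchy_Schwarz_ineq2[of "?y - x n" "z - ?y"] False dQ[OF zQ yQ] rho
              by (smt (verit, best) mult_mono norm_ge_zero)
            then have "tau * ((?y - x n) \<bullet> (z - ?y)) \<le> tau * (\<rho> * (2 * R))"
              using tau by (smt (verit, best) abs_le_D1 mult_left_mono)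
            then have t2: "tau * ((?y - x n) \<bullet> (z - ?y)) \<le> \<eta> / 2" using trho by (simp add: mult.assoc)
            show "- \<eta> \<le> F ?y \<bullet> (z - ?y)" using s0 t1 t2 by linarith
          qed
          then have "infdist ?y S < \<delta>" using eta True yQ by blast
          then have "a (Suc n) < \<delta>^2" unfolding a_def
            using power_strict_mono[of "infdist ?y S" \<delta> 2] infdist_nonneg by auto
          then show ?thesis by simp
        next
          case False
          have "2 * e n / tau * (phi ?y - ps) \<ge> 2 * e n / tau * \<eta>"
            using False en tau by (intro mult_left_mono) auto
          moreover have "norm (?y - x n)^2 \<ge> 0" by simp
          ultimately have "a (Suc n) \<le> a n - 2 * e n / tau * \<eta>" using arec[of n] by linarith
          then show ?thesis by (simp add: c_def mult.commute mult.left_commute)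
        qed
      qed
    qed
    obtain M where M: "\<forall>n\<ge>M. a n < \<delta>^2"
      using seq_lemma[OF a0 cp _ st div] epos less_imp_le by blast
    have "\<forall>n\<ge>M. infdist (x n) S < \<delta>"
      using M dpos unfolding a_def by (meson abs_of_nonneg infdist_nonneg less_le power2_less_imp_less)
    then show ?thesis by blast
  qed
  have zl: "(\<lambda>k. x (r k)) \<longlonglongrightarrow> z" using lp by (simp add: o_def)
  have "(\<lambda>k. infdist (x (r k)) S) \<longlonglongrightarrow> infdist z S" by (intro tendsto_intros zl)
  have iz: "infdist z S \<le> \<delta>" if dpos: "\<delta> > 0" for \<delta>
  proof -
    obtain M where M: "\<forall>n\<ge>M. infdist (x n) S < \<delta>" using evsmall[OF dpos] by blast
    have "\<forall>k\<ge>M. infdist (x (r k)) S \<le> \<delta>"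
      using M lp(1) seq_suble by (metis le_trans less_imp_le)
    then show ?thesis
      using \<open>(\<lambda>k. infdist (x (r k)) S) \<longlonglongrightarrow> infdist z S\<close> by (intro LIMSEQ_le_const2) auto
  qed
  have "infdist z S = 0"
  proof (rule ccontr)
    assume "infdist z S \<noteq> 0"
    then have pz: "infdist z S > 0" using infdist_nonneg[of z S] by linarith
    then have "infdist z S \<le> infdist z S / 2" using iz[of "infdist z S / 2"] by simp
    then show False using pz by linarith
  qed
  then have "z \<in> S" using in_closure_iff_infdist_zero[OF Sne] Scl closure_closed by blast
  then have "z \<in> SV" "phi z = ps" using Sprop by auto
  then show ?thesis using s ps_def SV_def by auto
qed




lemma proj_comp: "proj blk i x $ k = (if blk k = i then x $ k else 0)"
  by (simp add: proj_def)

lemma upd_comp: "upd blk x i y $ k = (if blk k = i then y $ k else x $ k)"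
  by (simp add: upd_def)

lemma proj_linear: "linear (proj blk i)"
  by (rule linearI) (auto simp: vec_eq_iff proj_comp)

lemma proj_bl: "bounded_linear (proj blk i)"
  by (rule proj_linear[unfolded linear_conv_bounded_linear])

lemma proj_diff: "proj blk i (a - b) = proj blk i a - proj blk i b"
  by (auto simp: vec_eq_iff proj_comp)

lemma proj_add: "proj blk i (a + b) = proj blk i a + proj blk i b"
  by (auto simp: vec_eq_iff proj_comp)

lemma proj_proj[simp]: "proj blk i (proj blk i x) = proj blk i x"
  by (auto simp: vec_eq_iff proj_comp)

lemma proj_block: "y \<in> block_set blk i \<Longrightarrow> proj blk i y = y"
  by (auto simp: vec_eq_iff proj_comp block_set_def)

lemma proj_in_block: "proj blk i x \<in> block_set blk i"
  by (auto simp: proj_comp block_set_def)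

lemma upd_eq: "upd blk x i y = x - proj blk i x + proj blk i y"
  by (auto simp: vec_eq_iff proj_comp upd_comp)

lemma upd_self: "upd blk x i (proj blk i x) = x"
  by (auto simp: vec_eq_iff proj_comp upd_comp)

lemma proj_upd: "y \<in> block_set blk i \<Longrightarrow> proj blk j (upd blk x i y) = (if j = i then y else proj blk j x)"
  by (auto simp: vec_eq_iff proj_comp upd_comp block_set_def)

lemma upd_minus: "upd blk x i y - x = proj blk i (y - x)"
  by (auto simp: vec_eq_iff proj_comp upd_comp)

lemma sum_proj:
  fixes blk :: "'n::finite \<Rightarrow> 'p::finite"
  shows "(\<Sum>i\<in>UNIV. proj blk i x) = x"
proof -
  have "(\<Sum>i\<in>UNIV. proj blk i x) $ k = x $ k" for k
    by (simp add: sum_component proj_comp sum.delta')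
  then show ?thesis by (simp add: vec_eq_iff)
qed

lemma inner_proj: "u \<bullet> proj blk i v = proj blk i u \<bullet> v"
  unfolding inner_vec_def by (rule sum.cong) (auto simp: proj_comp)

lemma pg_inner: "pseudo_grad blk g x \<bullet> proj blk i v = g i x \<bullet> proj blk i v"
  unfolding inner_vec_def pseudo_grad_def
  by (intro sum.cong) (auto simp: proj_comp)

lemma pg_sum:
  fixes blk :: "'n::finite \<Rightarrow> 'p::finite"
  shows "pseudo_grad blk g x \<bullet> v = (\<Sum>i\<in>UNIV. g i x \<bullet> proj blk i v)"
proof -
  have "pseudo_grad blk g x \<bullet> v = pseudo_grad blk g x \<bullet> (\<Sum>i\<in>UNIV. proj blk i v)"
    by (simp add: sum_proj)
  also have "\<dots> = (\<Sum>i\<in>UNIV. pseudo_grad blk g x \<bullet> proj blk i v)"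
    by (simp add: inner_sum_right)
  also have "\<dots> = (\<Sum>i\<in>UNIV. g i x \<bullet> proj blk i v)"
    by (simp add: pg_inner)
  finally show ?thesis .
qed

lemma prodQ_upd:
  assumes "x \<in> prodQ blk Qi" "y \<in> Qi i" "Qi i \<subseteq> block_set blk i"
  shows "upd blk x i y \<in> prodQ blk Qi"
  using assms by (auto simp: prodQ_def proj_upd)

lemma der_upd:
  assumes "(h has_derivative (\<lambda>v. g \<bullet> v)) (at x)"
  shows "((\<lambda>y. h (upd blk x i y)) has_derivative (\<lambda>v. g \<bullet> proj blk i v)) (at (proj blk i x))"
proof -
  have "((\<lambda>y. x - proj blk i x + proj blk i y) has_derivative proj blk i) (at (proj blk i x))"
    using proj_bl by (auto intro!: derivative_eq_intros bounded_linear.has_derivative[OF proj_bl])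
  moreover have "x - proj blk i x + proj blk i (proj blk i x) = x" by simp
  ultimately have "((\<lambda>y. h (x - proj blk i x + proj blk i y)) has_derivative (\<lambda>v. g \<bullet> proj blk i v)) (at (proj blk i x))"
    using has_derivative_compose[of "\<lambda>y. x - proj blk i x + proj blk i y" "proj blk i" "proj blk i x" UNIV h "\<lambda>v. g \<bullet> v"] assms
    by (simp add: o_def)
  then show ?thesis by (simp add: upd_eq)
qed

lemma NE_VI:
  fixes blk :: "'n::finite \<Rightarrow> 'p::finite"
  assumes A: "\<forall>i. convex (Qi i) \<and> Qi i \<subseteq> block_set blk i"
    and der: "\<forall>i. (h i has_derivative (\<lambda>v. g i x \<bullet> v)) (at x)"
    and NE: "is_NE blk Qi h x" and z: "z \<in> prodQ blk Qi"
  shows "0 \<le> pseudo_grad blk g x \<bullet> (z - x)"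
proof -
  have xQ: "x \<in> prodQ blk Qi" using NE is_NE_def by blast
  have "0 \<le> g i x \<bullet> proj blk i (z - x)" for i
  proof -
    have "0 \<le> g i x \<bullet> proj blk i (proj blk i z - proj blk i x)"
    proof (rule min_grad[of "Qi i" "proj blk i x" "proj blk i z" "\<lambda>y. h i (upd blk x i y)"])
      show "convex (Qi i)" using A by blast
      show "proj blk i x \<in> Qi i" using xQ unfolding prodQ_def by blast
      show "proj blk i z \<in> Qi i" using z unfolding prodQ_def by blast
      show "\<forall>y\<in>Qi i. h i (upd blk x i (proj blk i x)) \<le> h i (upd blk x i y)"
        using NE unfolding is_NE_def upd_self by blast
      show "((\<lambda>y. h i (upd blk x i y)) has_derivative (\<lambda>v. g i x \<bullet> proj blk i v)) (at (proj blk i x))"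
        by (rule der_upd[OF der[rule_format]])
    qed
    then show ?thesis by (simp add: proj_diff)
  qed
  then show ?thesis by (simp add: pg_sum sum_nonneg)
qed

lemma VI_NE:
  fixes blk :: "'n::finite \<Rightarrow> 'p::finite"
  assumes A: "\<forall>i. convex (Qi i) \<and> Qi i \<subseteq> block_set blk i"
    and der: "\<forall>i. (h i has_derivative (\<lambda>v. g i x \<bullet> v)) (at x)"
    and cv: "\<forall>i. convex_on (Qi i) (\<lambda>y. h i (upd blk x i y))"
    and xQ: "x \<in> prodQ blk Qi"
    and VI: "\<forall>z\<in>prodQ blk Qi. 0 \<le> pseudo_grad blk g x \<bullet> (z - x)"
  shows "is_NE blk Qi h x"
  unfolding is_NE_def
proof (intro conjI xQ allI ballI)
  fix i y assume y: "y \<in> Qi i"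
  have zQ: "upd blk x i y \<in> prodQ blk Qi" using prodQ_upd[OF xQ y] A by blast
  have "0 \<le> pseudo_grad blk g x \<bullet> (upd blk x i y - x)" using VI zQ by blast
  moreover have "pseudo_grad blk g x \<bullet> (upd blk x i y - x) = g i x \<bullet> proj blk i (y - proj blk i x)"
    by (simp only: upd_minus pg_inner) (simp add: proj_diff)
  ultimately have "0 \<le> g i x \<bullet> proj blk i (y - proj blk i x)" by simp
  moreover have "g i x \<bullet> proj blk i (y - proj blk i x) \<le> h i (upd blk x i y) - h i (upd blk x i (proj blk i x))"
  proof (rule conv_grad_ineq[of "Qi i" "\<lambda>y. h i (upd blk x i y)" "proj blk i x" y])
    show "convex_on (Qi i) (\<lambda>y. h i (upd blk x i y))" using cv by blast
    show "proj blk i x \<in> Qi i" using xQ unfolding prodQ_def by blast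
    show "y \<in> Qi i" by fact
    show "((\<lambda>y. h i (upd blk x i y)) has_derivative (\<lambda>v. g i x \<bullet> proj blk i v)) (at (proj blk i x))"
      by (rule der_upd[OF der[rule_format]])
  qed
  moreover have "h i (upd blk x i (proj blk i x)) = h i x" by (simp only: upd_self)
  ultimately show "h i x \<le> h i (upd blk x i y)" by linarith
qed




lemma proj_der[derivative_intros]:
  "(g has_derivative g') F \<Longrightarrow> ((\<lambda>x. proj blk i (g x)) has_derivative (\<lambda>h. proj blk i (g' h))) F"
  by (rule bounded_linear.has_derivative[OF proj_bl])

lemma inner_proj_same: "(proj blk i a - proj blk i b) \<bullet> proj blk i h = (proj blk i a - proj blk i b) \<bullet> h"
  by (simp only: inner_proj proj_diff proj_proj)

lemma pert_der:
  assumes fd: "(f i has_derivative (\<lambda>v. g \<bullet> v)) (at x)"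
    and pd: "(phi has_derivative (\<lambda>v. gp \<bullet> v)) (at x)"
  shows "(pert_game blk f phi tau e y i has_derivative
     (\<lambda>v. (g + e *\<^sub>R gp + tau *\<^sub>R (proj blk i x - proj blk i y)) \<bullet> v)) (at x)"
proof -
  have eq: "pert_game blk f phi tau e y i = (\<lambda>x. f i x + e * phi x
     + tau / 2 * ((proj blk i x - proj blk i y) \<bullet> (proj blk i x - proj blk i y)))"
    by (simp add: pert_game_def power2_norm_eq_inner)
  define p where "p = proj blk i x - proj blk i y"
  have dp: "((\<lambda>x. proj blk i x - proj blk i y) has_derivative (\<lambda>h. proj blk i h - 0)) (at x)"
    by (rule has_derivative_diff[OF bounded_linear.has_derivative[OF proj_bl has_derivative_ident] has_derivative_const])
  have di: "((\<lambda>x. (proj blk i x - proj blk i y) \<bullet> (proj blk i x - proj blk i y)) has_derivative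
      (\<lambda>h. (proj blk i x - proj blk i y) \<bullet> (proj blk i h - 0) + (proj blk i h - 0) \<bullet> (proj blk i x - proj blk i y))) (at x)"
    by (rule has_derivative_inner[OF dp dp])
  have dall: "((\<lambda>x. f i x + e * phi x
     + tau / 2 * ((proj blk i x - proj blk i y) \<bullet> (proj blk i x - proj blk i y))) has_derivative
     (\<lambda>h. g \<bullet> h + e * (gp \<bullet> h) + tau / 2 * ((proj blk i x - proj blk i y) \<bullet> (proj blk i h - 0) + (proj blk i h - 0) \<bullet> (proj blk i x - proj blk i y)))) (at x)"
    by (intro has_derivative_add fd has_derivative_mult_right pd di)
  have feq: "(\<lambda>h. g \<bullet> h + e * (gp \<bullet> h) + tau / 2 * ((proj blk i x - proj blk i y) \<bullet> (proj blk i h - 0) + (proj blk i h - 0) \<bullet> (proj blk i x - proj blk i y)))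
     = (\<lambda>v. (g + e *\<^sub>R gp + tau *\<^sub>R (proj blk i x - proj blk i y)) \<bullet> v)"
  proof (rule ext)
    fix h
    have "(proj blk i h) \<bullet> (proj blk i x - proj blk i y) = (proj blk i x - proj blk i y) \<bullet> h"
      using inner_proj_same[of blk i x y h] by (simp only: inner_commute)
    moreover have "(proj blk i x - proj blk i y) \<bullet> proj blk i h = (proj blk i x - proj blk i y) \<bullet> h"
      by (rule inner_proj_same)
    ultimately show "g \<bullet> h + e * (gp \<bullet> h) + tau / 2 * ((proj blk i x - proj blk i y) \<bullet> (proj blk i h - 0) + (proj blk i h - 0) \<bullet> (proj blk i x - proj blk i y))
      = (g + e *\<^sub>R gp + tau *\<^sub>R (proj blk i x - proj blk i y)) \<bullet> h"
      by (simp only: diff_zero inner_add_left inner_scaleR_left) simp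
  qed
  show ?thesis unfolding eq using dall feq by simp
qed




lemma VI_exists:
  fixes G :: "'a::euclidean_space \<Rightarrow> 'a"
  assumes Q: "compact Q" "convex Q" "Q \<noteq> {}" and Gc: "continuous_on Q G"
  shows "\<exists>y\<in>Q. \<forall>z\<in>Q. 0 \<le> G y \<bullet> (z - y)"
proof -
  have Qcl: "closed Q" using Q compact_imp_closed by blast
  define T where "T x = closest_point Q (x - G x)" for x
  have Tc: "continuous_on Q T"
    unfolding T_def
    by (rule continuous_on_compose2[OF continuous_on_closest_point[OF Q(2) Qcl Q(3)], of _ "\<lambda>x. x - G x" UNIV])
       (auto intro!: continuous_intros Gc)
  have TQ: "T \<in> Q \<rightarrow> Q" unfolding T_def using closest_point_in_set[OF Qcl Q(3)] by blast
  obtain y where y: "y \<in> Q" "T y = y" using brouwer[OF Q Tc TQ] by blast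
  have "\<forall>z\<in>Q. 0 \<le> G y \<bullet> (z - y)"
  proof
    fix z assume "z \<in> Q"
    then have "inner ((y - G y) - closest_point Q (y - G y)) (z - closest_point Q (y - G y)) \<le> 0"
      using closest_point_dot[OF Q(2) Qcl] by blast
    then show "0 \<le> G y \<bullet> (z - y)" using y(2) unfolding T_def by simp
  qed
  then show ?thesis using y by blast
qed

lemma VI_unique:
  fixes G :: "'a::real_inner \<Rightarrow> 'a"
  assumes tau: "tau > 0" and sm: "\<forall>a\<in>Q. \<forall>b\<in>Q. tau * norm (a - b)^2 \<le> (G a - G b) \<bullet> (a - b)"
    and y1: "y1 \<in> Q" "\<forall>z\<in>Q. 0 \<le> G y1 \<bullet> (z - y1)"
    and y2: "y2 \<in> Q" "\<forall>z\<in>Q. 0 \<le> G y2 \<bullet> (z - y2)"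
  shows "y1 = y2"
proof -
  have "0 \<le> G y1 \<bullet> (y2 - y1)" "0 \<le> G y2 \<bullet> (y1 - y2)" using y1 y2 by auto
  then have "(G y1 - G y2) \<bullet> (y1 - y2) \<le> 0"
    by (simp add: inner_diff_left inner_diff_right inner_commute)
  then have "tau * norm (y1 - y2)^2 \<le> 0" using sm y1 y2 by (meson order_trans)
  then have "norm (y1 - y2)^2 \<le> 0" using tau by (simp add: mult_le_0_iff)
  then show ?thesis by simp
qed

lemma inner_fun_eq:
  fixes a b :: "'a::real_inner"
  assumes "(\<lambda>v. a \<bullet> v) = (\<lambda>v. b \<bullet> v)"
  shows "a = b"
proof -
  have "a \<bullet> (a - b) = b \<bullet> (a - b)" using fun_cong[OF assms, of "a - b"] by simp
  then have "(a - b) \<bullet> (a - b) = 0" by (simp add: inner_diff_left)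
  then show ?thesis by simp
qed

lemma bound_helper:
  fixes g gp p va vb :: "'a::real_normed_vector"
  assumes va: "va = g + ea *\<^sub>R gp + tau *\<^sub>R p" and vb: "vb = g + eb *\<^sub>R gp + tau *\<^sub>R p"
    and ne: "ea \<noteq> eb" and tau: "tau > 0"
    and hb1: "norm va \<le> Ba" and hb2: "norm vb \<le> Bb" and hb0: "norm g \<le> Bz"
  shows "norm p \<le> ((\<bar>eb\<bar> * Ba + \<bar>ea\<bar> * Bb) / \<bar>eb - ea\<bar> + Bz) / tau"
proof -
  have d: "eb - ea \<noteq> 0" using ne by simp
  have "eb *\<^sub>R va - ea *\<^sub>R vb = (eb - ea) *\<^sub>R (g + tau *\<^sub>R p)"
    by (simp add: va vb algebra_simps)
  then have "g + tau *\<^sub>R p = (1 / (eb - ea)) *\<^sub>R (eb *\<^sub>R va - ea *\<^sub>R vb)"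
    using d by simp
  then have eq: "tau *\<^sub>R p = (1 / (eb - ea)) *\<^sub>R (eb *\<^sub>R va - ea *\<^sub>R vb) - g"
    by (simp add: algebra_simps)
  have "norm (eb *\<^sub>R va - ea *\<^sub>R vb) \<le> \<bar>eb\<bar> * Ba + \<bar>ea\<bar> * Bb"
  proof -
    have "norm (eb *\<^sub>R va - ea *\<^sub>R vb) \<le> norm (eb *\<^sub>R va) + norm (ea *\<^sub>R vb)"
      by (rule norm_triangle_ineq4)
    also have "\<dots> \<le> \<bar>eb\<bar> * Ba + \<bar>ea\<bar> * Bb"
      using hb1 hb2 by (simp add: add_mono mult_left_mono)
    finally show ?thesis .
  qed
  then have "norm ((1 / (eb - ea)) *\<^sub>R (eb *\<^sub>R va - ea *\<^sub>R vb)) \<le> (\<bar>eb\<bar> * Ba + \<bar>ea\<bar> * Bb) / \<bar>eb - ea\<bar>"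
    using d by (simp add: divide_right_mono)
  then have "norm (tau *\<^sub>R p) \<le> (\<bar>eb\<bar> * Ba + \<bar>ea\<bar> * Bb) / \<bar>eb - ea\<bar> + Bz"
    unfolding eq using hb0 norm_triangle_ineq4 by (smt (verit))
  then show ?thesis using tau by (simp add: field_simps)
qed




theorem mainTheorem10:
  fixes blk :: "'n::finite \<Rightarrow> 'p::finite"
    and Qi :: "'p \<Rightarrow> (real^'n) set"
    and f :: "'p \<Rightarrow> real^'n \<Rightarrow> real"
    and phi :: "real^'n \<Rightarrow> real"
    and L_phi tau :: real
    and eps :: "nat \<Rightarrow> real"
    and x0 :: "real^'n"
  assumes blocks: "\<forall>i. \<exists>k. blk k = i"
    and mono: "monotone_NEP blk Qi f"
    and A2: "Assumption2 blk Qi f"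
    and sol_ne: "SOL blk Qi f \<noteq> {}"
    and phi_C1: "\<exists>U gphi. open U \<and> prodQ blk Qi \<subseteq> U \<and>
        (\<forall>x\<in>U. (phi has_derivative (\<lambda>h. gphi x \<bullet> h)) (at x)) \<and> continuous_on U gphi \<and>
        (\<forall>x\<in>prodQ blk Qi. \<forall>y\<in>prodQ blk Qi. norm (gphi x - gphi y) \<le> L_phi * norm (x - y))"
    and phi_convex: "convex_on (prodQ blk Qi) phi"
    and phi_level: "\<forall>c. bounded {x \<in> SOL blk Qi f. phi x \<le> c}"
    and tau_pos: "tau > 0"
    and PU: "\<forall>n. \<forall>y\<in>prodQ blk Qi. PUps_NEP blk Qi (pert_game blk f phi tau (eps n) y)"
    and eps_pos: "\<forall>n. eps n > 0"
    and eps_dec: "decseq eps"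
    and eps_lim: "eps \<longlonglongrightarrow> 0"
    and eps_sum: "filterlim (\<lambda>N. \<Sum>n<N. eps n) at_top sequentially"
    and x0: "x0 \<in> prodQ blk Qi"
  shows "(\<exists>!x. x 0 = x0 \<and> (\<forall>n. is_NE blk Qi (pert_game blk f phi tau (eps n) (x n)) (x (Suc n))))
       \<and> (\<forall>x. x 0 = x0 \<and> (\<forall>n. is_NE blk Qi (pert_game blk f phi tau (eps n) (x n)) (x (Suc n)))
            \<longrightarrow> bounded (range x) \<and>
                (\<forall>z. (\<exists>r. strict_mono r \<and> (x \<circ> r) \<longlonglongrightarrow> z) \<longrightarrow>
                     z \<in> SOL blk Qi f \<and> (\<forall>w \<in> SOL blk Qi f. phi z \<le> phi w)))"
proof -
  define Q where "Q = prodQ blk Qi"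
  have A1: "Assumption1 blk Qi f" using mono monotone_NEP_def by blast
  obtain U gg where U: "open U" "Q \<subseteq> U" "has_grads U f gg"
    and Fmono: "\<forall>a\<in>Q. \<forall>b\<in>Q. 0 \<le> (pseudo_grad blk gg a - pseudo_grad blk gg b) \<bullet> (a - b)"
    using mono unfolding monotone_NEP_def Q_def by blast
  have A1i: "\<forall>i. convex (Qi i) \<and> Qi i \<subseteq> block_set blk i" and A1cl: "\<forall>i. closed (Qi i)"
    using A1 unfolding Assumption1_def by blast+
  have cvf: "\<forall>i. \<forall>x\<in>Q. convex_on (Qi i) (\<lambda>y. f i (upd blk x i y))"
    using A1 unfolding Assumption1_def Q_def by blast
  have fder: "\<And>i x. x \<in> Q \<Longrightarrow> (f i has_derivative (\<lambda>v. gg i x \<bullet> v)) (at x)"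
    using U unfolding has_grads_def by blast
  have ggc: "\<And>i. continuous_on Q (gg i)"
    using U unfolding has_grads_def by (meson continuous_on_subset)
  obtain Up gphi where Up: "open Up" "Q \<subseteq> Up"
    "\<forall>x\<in>Up. (phi has_derivative (\<lambda>h. gphi x \<bullet> h)) (at x)" "continuous_on Up gphi"
    using phi_C1 unfolding Q_def by blast
  have pder: "\<And>x. x \<in> Q \<Longrightarrow> (phi has_derivative (\<lambda>v. gphi x \<bullet> v)) (at x)"
    using Up by blast
  have gphic: "continuous_on Q gphi" using Up continuous_on_subset by blast
  have phic: "continuous_on Q phi"
    by (rule continuous_at_imp_continuous_on) (use pder has_derivative_continuous in blast)
  define F where "F = pseudo_grad blk gg"
  have Fc: "continuous_on Q F"
    unfolding F_def pseudo_grad_def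
    by (intro continuous_on_vec_lambda continuous_on_component ggc)
  have x0Q: "x0 \<in> Q" using x0 Q_def by simp
  have Qeq: "Q = (\<Inter>i. proj blk i -` Qi i)" unfolding Q_def prodQ_def by auto
  have Qcl: "closed Q" unfolding Qeq
    using continuous_closed_vimage[OF A1cl[rule_format] linear_continuous_at[OF proj_bl]] by (intro closed_INT) auto
  have Qcv: "convex Q" unfolding Qeq
    by (intro convex_INT convex_linear_vimage proj_linear) (use A1i in blast)
  have grad: "\<forall>a\<in>Q. \<forall>b\<in>Q. gphi a \<bullet> (b - a) \<le> phi b - phi a"
    using conv_grad_ineq[of Q phi] phi_convex pder unfolding Q_def by blast
  have Pmono: "0 \<le> (gphi a - gphi b) \<bullet> (a - b)" if "a \<in> Q" "b \<in> Q" for a b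
  proof -
    have "gphi a \<bullet> (b - a) \<le> phi b - phi a" "gphi b \<bullet> (a - b) \<le> phi a - phi b"
      using grad that by auto
    then show ?thesis by (simp add: inner_diff_left inner_diff_right inner_commute)
  qed
  define gpt where "gpt n y i x = gg i x + eps n *\<^sub>R gphi x + tau *\<^sub>R (proj blk i x - proj blk i y)"
    for n y i x
  have ptder: "\<And>n y i x. x \<in> Q \<Longrightarrow>
     (pert_game blk f phi tau (eps n) y i has_derivative (\<lambda>v. gpt n y i x \<bullet> v)) (at x)"
    unfolding gpt_def by (rule pert_der[OF fder pder])
  define G where "G n y x = F x + eps n *\<^sub>R gphi x + tau *\<^sub>R (x - y)" for n y x
  have pgG: "pseudo_grad blk (gpt n y) x = G n y x" for n y x
    by (simp add: vec_eq_iff pseudo_grad_def gpt_def G_def F_def proj_comp)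
  have grad_unique: "a = b" if "(h has_derivative (\<lambda>v. a \<bullet> v)) (at x)" "(h has_derivative (\<lambda>v. b \<bullet> v)) (at x)"
    for h :: "real^'n \<Rightarrow> real" and a b x
    using has_derivative_unique[OF that] inner_fun_eq by blast
  obtain U2 gA HA where A2o: "open U2" "Q \<subseteq> U2" "has_grads_hess U2 f gA HA"
      "\<forall>i. bounded (gA i ` Q)"
    using A2 unfolding Assumption2_def Q_def by blast
  have ggb: "\<exists>B. \<forall>x\<in>Q. norm (gg i x) \<le> B" for i
  proof -
    have "gA i x = gg i x" if "x \<in> Q" for x
      using A2o(2,3) that fder[OF that] grad_unique unfolding has_grads_hess_def has_grads_def by blast
    moreover obtain B where "\<forall>v\<in>gA i ` Q. norm v \<le> B" using A2o(4) bounded_iff by blast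
    ultimately show ?thesis by auto
  qed
  have gptb: "\<exists>B. \<forall>x\<in>Q. norm (gpt n x0 i x) \<le> B" for n i
  proof -
    have "Assumption2 blk Qi (pert_game blk f phi tau (eps n) x0)"
      using PU x0 unfolding PUps_NEP_def by blast
    then obtain U3 g3 H3 where o: "Q \<subseteq> U3" "has_grads_hess U3 (pert_game blk f phi tau (eps n) x0) g3 H3"
        "\<forall>i. bounded (g3 i ` Q)"
      unfolding Assumption2_def Q_def by blast
    have "g3 i x = gpt n x0 i x" if "x \<in> Q" for x
      using o(1,2) that ptder[OF that] grad_unique unfolding has_grads_hess_def has_grads_def by blast
    moreover obtain B where "\<forall>v\<in>g3 i ` Q. norm v \<le> B" using o(3) bounded_iff by blast
    ultimately show ?thesis by auto
  qed
  obtain m where m: "eps m < eps 0"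
  proof -
    have "\<forall>\<^sub>F n in sequentially. eps n < eps 0"
      using eps_lim eps_pos by (simp add: order_tendstoD(2))
    then show ?thesis using that by (auto simp: eventually_sequentially)
  qed
  have projb: "\<exists>K. \<forall>x\<in>Q. norm (proj blk i x) \<le> K" for i
  proof -
    obtain B0 where B0: "\<forall>x\<in>Q. norm (gg i x) \<le> B0" using ggb by blast
    obtain B1 where B1: "\<forall>x\<in>Q. norm (gpt 0 x0 i x) \<le> B1" using gptb by blast
    obtain B2 where B2: "\<forall>x\<in>Q. norm (gpt m x0 i x) \<le> B2" using gptb by blast
    have "norm (proj blk i x - proj blk i x0) \<le> ((\<bar>eps m\<bar> * B1 + \<bar>eps 0\<bar> * B2) / \<bar>eps m - eps 0\<bar> + B0) / tau"
      if "x \<in> Q" for x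
      by (rule bound_helper[where g="gg i x" and ea="eps 0" and gp="gphi x" and eb="eps m"
            and tau=tau and p="proj blk i x - proj blk i x0" and va="gpt 0 x0 i x" and vb="gpt m x0 i x"
            and Ba=B1 and Bb=B2 and Bz=B0])
         (use m that B0 B1 B2 tau_pos in \<open>auto simp: gpt_def\<close>)
    then have "norm (proj blk i x) \<le> ((\<bar>eps m\<bar> * B1 + \<bar>eps 0\<bar> * B2) / \<bar>eps m - eps 0\<bar> + B0) / tau + norm (proj blk i x0)"
      if "x \<in> Q" for x
      using that norm_triangle_ineq2[of "proj blk i x" "proj blk i x0"] by force
    then show ?thesis by blast
  qed
  then obtain K where K: "\<And>i x. x \<in> Q \<Longrightarrow> norm (proj blk i x) \<le> K i" by metis
  have Qb: "bounded Q"
    unfolding bounded_iff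
  proof (intro exI ballI)
    fix x assume xQ: "x \<in> Q"
    have "norm x = norm (\<Sum>i\<in>UNIV. proj blk i x)" by (simp add: sum_proj)
    also have "\<dots> \<le> (\<Sum>i\<in>UNIV. norm (proj blk i x))" by (rule norm_sum)
    also have "\<dots> \<le> (\<Sum>i\<in>UNIV. K i)" using K xQ by (intro sum_mono) auto
    finally show "norm x \<le> (\<Sum>i\<in>UNIV. K i)" .
  qed
  have Qc: "compact Q" using Qb Qcl compact_eq_bounded_closed by blast
  have cvpt: "\<forall>i. convex_on (Qi i) (\<lambda>z. pert_game blk f phi tau (eps n) y i (upd blk x i z))"
    if "y \<in> Q" "x \<in> Q" for n y x
  proof -
    have "Assumption1 blk Qi (pert_game blk f phi tau (eps n) y)"
      using PU that unfolding PUps_NEP_def Q_def by blast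
    then show ?thesis using that unfolding Assumption1_def Q_def by blast
  qed
  have NEiff: "is_NE blk Qi (pert_game blk f phi tau (eps n) y) x' \<longleftrightarrow> x' \<in> Q \<and> (\<forall>z\<in>Q. 0 \<le> G n y x' \<bullet> (z - x'))"
    if yQ: "y \<in> Q" for n y x'
  proof
    assume ne: "is_NE blk Qi (pert_game blk f phi tau (eps n) y) x'"
    then have xQ: "x' \<in> Q" unfolding is_NE_def Q_def by blast
    have "\<forall>z\<in>Q. 0 \<le> pseudo_grad blk (gpt n y) x' \<bullet> (z - x')"
      using NE_VI[OF A1i _ ne] ptder[OF xQ] unfolding Q_def by blast
    then show "x' \<in> Q \<and> (\<forall>z\<in>Q. 0 \<le> G n y x' \<bullet> (z - x'))" using xQ pgG by simp
  next
    assume h: "x' \<in> Q \<and> (\<forall>z\<in>Q. 0 \<le> G n y x' \<bullet> (z - x'))"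
    show "is_NE blk Qi (pert_game blk f phi tau (eps n) y) x'"
    proof (rule VI_NE[OF A1i])
      show "\<forall>i. (pert_game blk f phi tau (eps n) y i has_derivative (\<lambda>v. gpt n y i x' \<bullet> v)) (at x')"
        using ptder h by blast
      show "\<forall>i. convex_on (Qi i) (\<lambda>z. pert_game blk f phi tau (eps n) y i (upd blk x' i z))"
        using cvpt yQ h by blast
      show "x' \<in> prodQ blk Qi" using h Q_def by simp
      show "\<forall>z\<in>prodQ blk Qi. 0 \<le> pseudo_grad blk (gpt n y) x' \<bullet> (z - x')"
        using h pgG Q_def by simp
    qed
  qed
  have Gsm: "\<forall>a\<in>Q. \<forall>b\<in>Q. tau * norm (a - b)^2 \<le> (G n y a - G n y b) \<bullet> (a - b)" for n y
  proof (intro ballI)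
    fix a b assume ab: "a \<in> Q" "b \<in> Q"
    have "(G n y a - G n y b) \<bullet> (a - b) = (F a - F b) \<bullet> (a - b) + eps n * ((gphi a - gphi b) \<bullet> (a - b)) + tau * ((a - b) \<bullet> (a - b))"
      by (simp add: G_def algebra_simps inner_diff_left inner_add_left)
    moreover have "0 \<le> (F a - F b) \<bullet> (a - b)" using Fmono ab F_def by blast
    moreover have "0 \<le> eps n * ((gphi a - gphi b) \<bullet> (a - b))" using Pmono[OF ab] eps_pos[rule_format, of n] by simp
    ultimately show "tau * norm (a - b)^2 \<le> (G n y a - G n y b) \<bullet> (a - b)"
      by (simp add: power2_norm_eq_inner)
  qed
  have Gc: "continuous_on Q (G n y)" for n y
    unfolding G_def by (intro continuous_intros Fc gphic)
  have exun: "\<exists>!x'. is_NE blk Qi (pert_game blk f phi tau (eps n) y) x'" if yQ: "y \<in> Q" for n y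
  proof -
    obtain x' where x': "x' \<in> Q" "\<forall>z\<in>Q. 0 \<le> G n y x' \<bullet> (z - x')"
      using VI_exists[OF Qc Qcv _ Gc] x0Q by blast
    show ?thesis
    proof (rule ex1I[of _ x'])
      show "is_NE blk Qi (pert_game blk f phi tau (eps n) y) x'" using NEiff[OF yQ] x' by blast
      fix x2 assume "is_NE blk Qi (pert_game blk f phi tau (eps n) y) x2"
      then have "x2 \<in> Q" "\<forall>z\<in>Q. 0 \<le> G n y x2 \<bullet> (z - x2)" using NEiff[OF yQ] by auto
      then show "x2 = x'" using VI_unique[OF tau_pos Gsm x'] by blast
    qed
  qed
  have SOLeq: "SOL blk Qi f = {w\<in>Q. \<forall>z\<in>Q. 0 \<le> F w \<bullet> (z - w)}"
  proof (rule set_eqI, rule iffI)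
    fix w assume "w \<in> SOL blk Qi f"
    then have ne: "is_NE blk Qi f w" unfolding SOL_def by simp
    then have wQ: "w \<in> Q" unfolding is_NE_def Q_def by blast
    have "\<forall>z\<in>Q. 0 \<le> F w \<bullet> (z - w)"
      using NE_VI[OF A1i _ ne] fder[OF wQ] unfolding Q_def F_def by blast
    then show "w \<in> {w\<in>Q. \<forall>z\<in>Q. 0 \<le> F w \<bullet> (z - w)}" using wQ by blast
  next
    fix w assume h: "w \<in> {w\<in>Q. \<forall>z\<in>Q. 0 \<le> F w \<bullet> (z - w)}"
    have "is_NE blk Qi f w"
    proof (rule VI_NE[OF A1i])
      show "\<forall>i. (f i has_derivative (\<lambda>v. gg i w \<bullet> v)) (at w)" using fder h by blast
      show "\<forall>i. convex_on (Qi i) (\<lambda>y. f i (upd blk w i y))" using cvf h by blast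
      show "w \<in> prodQ blk Qi" using h Q_def by simp
      show "\<forall>z\<in>prodQ blk Qi. 0 \<le> pseudo_grad blk gg w \<bullet> (z - w)" using h Q_def F_def by simp
    qed
    then show "w \<in> SOL blk Qi f" unfolding SOL_def by simp
  qed
  have seqQ: "x n \<in> Q" if "x 0 = x0" "\<forall>n. is_NE blk Qi (pert_game blk f phi tau (eps n) (x n)) (x (Suc n))" for x n
  proof (cases n)
    case 0 then show ?thesis using that x0Q by simp
  next
    case (Suc k) then show ?thesis using that(2)[rule_format, of k] unfolding is_NE_def Q_def by simp
  qed
  define nx where "nx n y = (THE x'. is_NE blk Qi (pert_game blk f phi tau (eps n) y) x')" for n y
  define xs where "xs = rec_nat x0 nx"
  have xs0: "xs 0 = x0" unfolding xs_def by simp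
  have xsS: "xs (Suc n) = nx n (xs n)" for n unfolding xs_def by simp
  have xsP: "xs n \<in> Q \<and> is_NE blk Qi (pert_game blk f phi tau (eps n) (xs n)) (xs (Suc n))" for n
  proof (induction n)
    case 0
    have "is_NE blk Qi (pert_game blk f phi tau (eps 0) (xs 0)) (nx 0 (xs 0))"
      unfolding nx_def by (rule theI'[OF exun]) (simp add: xs0 x0Q)
    then show ?case using xs0 x0Q xsS by simp
  next
    case (Suc n)
    then have q: "xs (Suc n) \<in> Q" unfolding is_NE_def Q_def by blast
    have "is_NE blk Qi (pert_game blk f phi tau (eps (Suc n)) (xs (Suc n))) (nx (Suc n) (xs (Suc n)))"
      unfolding nx_def by (rule theI'[OF exun[OF q]])
    then show ?case using q xsS by simp
  qed
  have part1: "\<exists>!x. x 0 = x0 \<and> (\<forall>n. is_NE blk Qi (pert_game blk f phi tau (eps n) (x n)) (x (Suc n)))"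
  proof (rule ex1I[of _ xs])
    show "xs 0 = x0 \<and> (\<forall>n. is_NE blk Qi (pert_game blk f phi tau (eps n) (xs n)) (xs (Suc n)))"
      using xs0 xsP by blast
    fix y assume y: "y 0 = x0 \<and> (\<forall>n. is_NE blk Qi (pert_game blk f phi tau (eps n) (y n)) (y (Suc n)))"
    have "y n = xs n" for n
    proof (induction n)
      case 0 then show ?case using y xs0 by simp
    next
      case (Suc n)
      have "is_NE blk Qi (pert_game blk f phi tau (eps n) (xs n)) (y (Suc n))"
        using y Suc by metis
      moreover have "is_NE blk Qi (pert_game blk f phi tau (eps n) (xs n)) (xs (Suc n))"
        using xsP by blast
      ultimately show ?case using exun[of "xs n" n] xsP by blast
    qed
    then show "y = xs" by blast
  qed
  have part2: "bounded (range x) \<and>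
                (\<forall>z. (\<exists>r. strict_mono r \<and> (x \<circ> r) \<longlonglongrightarrow> z) \<longrightarrow>
                     z \<in> SOL blk Qi f \<and> (\<forall>w \<in> SOL blk Qi f. phi z \<le> phi w))"
    if hx: "x 0 = x0 \<and> (\<forall>n. is_NE blk Qi (pert_game blk f phi tau (eps n) (x n)) (x (Suc n)))" for x
  proof -
    have xQ: "\<forall>n. x n \<in> Q" using seqQ[OF conjunct1[OF hx] conjunct2[OF hx]] by blast
    have "bounded (range x)" by (rule bounded_subset[OF Qb]) (use xQ in auto)
    moreover have "z \<in> SOL blk Qi f \<and> (\<forall>w \<in> SOL blk Qi f. phi z \<le> phi w)"
      if "strict_mono r" "(x \<circ> r) \<longlonglongrightarrow> z" for z r
    proof -
      have step: "\<forall>n. \<forall>z\<in>Q. 0 \<le> (F (x (Suc n)) + eps n *\<^sub>R gphi (x (Suc n)) + tau *\<^sub>R (x (Suc n) - x n)) \<bullet> (z - x (Suc n))"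
        using NEiff xQ hx unfolding G_def by blast
      have "z \<in> {w\<in>Q. \<forall>z\<in>Q. 0 \<le> F w \<bullet> (z - w)} \<and> (\<forall>w\<in>{w\<in>Q. \<forall>z\<in>Q. 0 \<le> F w \<bullet> (z - w)}. phi z \<le> phi w)"
      proof (rule hier[OF Qc Fc _ phic gphic grad _ tau_pos eps_pos eps_lim eps_sum xQ step that])
        show "\<forall>a\<in>Q. \<forall>b\<in>Q. 0 \<le> (F a - F b) \<bullet> (a - b)" using Fmono F_def by blast
        show "{w\<in>Q. \<forall>z\<in>Q. 0 \<le> F w \<bullet> (z - w)} \<noteq> {}" using sol_ne SOLeq by simp
      qed
      then show ?thesis using SOLeq by simp
    qed
    ultimately show ?thesis by blast
  qed
  show ?thesis using part1 part2 by blast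
qed


end
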